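(* Let $p$ be a prime and $a,b,c$ positive integers such that $c$ is a primitive divisor of $p^a-1$, and put $u=\tfrac{p^a-1}{c}$. Then the following are equivalent: (i) $bc$ is a primitive divisor of $p^{ab}-1$; (ii) $bc\mid p^{ab}-1$ and $bc\nmid p^{a\ell}-1$ for all $1\le \ell\le b-1$; (iii) $b\mid u\,\Psi_b(p^a)$ and $b\nmid u\,\Psi_\ell(p^a)$ for all $1\le\ell\le b-1$.
   Context: An integer $e$ is a primitive divisor of $p^a-1$ if $e\mid p^a-1$ and $e\nmid p^t-1$ for every $1\le t<a$. For a positive integer $t$, $\Psi_t(x)=x^{t-1}+\cdots+x+1$. *)

theory Defs
  imports "HOL-Computational_Algebra.Primes"
begin

definition primitive_divisor :: "nat \<Rightarrow> nat \<Rightarrow> nat \<Rightarrow> bool" where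
  "primitive_divisor e p a \<longleftrightarrow> e dvd p ^ a - 1 \<and> (\<forall>t. 1 \<le> t \<and> t < a \<longrightarrow> \<not> e dvd p ^ t - 1)"

definition Psi :: "nat \<Rightarrow> nat \<Rightarrow> nat" where
  "Psi t x = (\<Sum>i<t. x ^ i)"

end

theory Submission
  imports Defs "HOL-Number_Theory.Number_Theory"
begin

lemma psi_geom: "(q - 1) * Psi l q = q ^ l - 1" if "q \<ge> 1" for q l :: nat
proof (induction l)
  case 0 then show ?case by (simp add: Psi_def)
next
  case (Suc l)
  have "Psi (Suc l) q = Psi l q + q ^ l" by (simp add: Psi_def)
  hence "(q - 1) * Psi (Suc l) q = (q ^ l - 1) + (q - 1) * q ^ l"
    using Suc by (simp add: algebra_simps)
  also have "\<dots> = q ^ Suc l - 1"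
  proof -
    have "q ^ l \<ge> 1" using that by simp
    thus ?thesis using that by (simp add: algebra_simps diff_mult_distrib)
  qed
  finally show ?case .
qed

lemma dvd_cong1: "c dvd x ^ t - 1 \<longleftrightarrow> [x ^ t = 1] (mod c)" if "x \<ge> 1" for x c t :: nat
  using that by (simp add: cong_altdef_nat)

theorem mainTheorem4:
  fixes p a b c :: nat
  assumes "prime p" and "a > 0" and "b > 0" and "c > 0"
    and "primitive_divisor c p a"
  defines "u \<equiv> (p ^ a - 1) div c"
  shows "(primitive_divisor (b * c) p (a * b)
           \<longleftrightarrow> (b * c dvd p ^ (a * b) - 1 \<and>
                (\<forall>l. 1 \<le> l \<and> l \<le> b - 1 \<longrightarrow> \<not> b * c dvd p ^ (a * l) - 1)))
       \<and> ((b * c dvd p ^ (a * b) - 1 \<and>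
                (\<forall>l. 1 \<le> l \<and> l \<le> b - 1 \<longrightarrow> \<not> b * c dvd p ^ (a * l) - 1))
           \<longleftrightarrow> (b dvd u * Psi b (p ^ a) \<and>
                (\<forall>l. 1 \<le> l \<and> l \<le> b - 1 \<longrightarrow> \<not> b dvd u * Psi l (p ^ a))))"
proof -
  have p1: "p \<ge> 1" using prime_gt_0_nat[OF assms(1)] by simp
  have cdiv: "c dvd p ^ a - 1" and prim: "\<And>t. 1 \<le> t \<Longrightarrow> t < a \<Longrightarrow> \<not> c dvd p ^ t - 1"
    using assms(5) unfolding primitive_divisor_def by auto
  have ca: "[p ^ a = 1] (mod c)" using cdiv dvd_cong1 p1 by blast
  have cop: "coprime c p"
  proof -
    have "coprime (p ^ a) c" using ca by (meson cong_imp_coprime cong_sym coprime_1_left)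
    thus ?thesis using assms(2) by (simp add: ac_simps)
  qed
  have ordpos: "ord c p > 0" using cop ord_eq_0 by blast
  have "ord c p dvd a" using ca ord_divides by blast
  hence ordle: "ord c p \<le> a" using assms(2) dvd_imp_le by blast
  have "c dvd p ^ (ord c p) - 1" using ord_works[of p c] dvd_cong1 p1 by blast
  hence orda: "ord c p = a" using prim[of "ord c p"] ordpos ordle by linarith
  have ordt: "\<And>t. c dvd p ^ t - 1 \<Longrightarrow> a dvd t"
    using dvd_cong1 p1 ord_divides orda by metis
  have cu: "c * u = p ^ a - 1" using cdiv unfolding u_def by simp
  have key: "\<And>l. b * c dvd p ^ (a * l) - 1 \<longleftrightarrow> b dvd u * Psi l (p ^ a)"
  proof -
    fix l
    have q1: "p ^ a \<ge> 1" using p1 by simp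
    have "p ^ (a * l) - 1 = c * (u * Psi l (p ^ a))"
    proof -
      have "p ^ (a * l) - 1 = (p ^ a - 1) * Psi l (p ^ a)"
        using psi_geom[OF q1, of l] by (simp add: power_mult)
      also have "\<dots> = c * (u * Psi l (p ^ a))" using cu by (metis mult.assoc)
      finally show ?thesis .
    qed
    thus "b * c dvd p ^ (a * l) - 1 \<longleftrightarrow> b dvd u * Psi l (p ^ a)"
      using assms(4) by (simp add: mult.commute[of b c])
  qed
  have eq1: "primitive_divisor (b * c) p (a * b)
           \<longleftrightarrow> (b * c dvd p ^ (a * b) - 1 \<and>
                (\<forall>l. 1 \<le> l \<and> l \<le> b - 1 \<longrightarrow> \<not> b * c dvd p ^ (a * l) - 1))"
  proof
    assume h: "primitive_divisor (b * c) p (a * b)"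
    show "b * c dvd p ^ (a * b) - 1 \<and>
                (\<forall>l. 1 \<le> l \<and> l \<le> b - 1 \<longrightarrow> \<not> b * c dvd p ^ (a * l) - 1)"
    proof (intro conjI allI impI)
      show "b * c dvd p ^ (a * b) - 1" using h unfolding primitive_divisor_def by blast
    next
      fix l assume l: "1 \<le> l \<and> l \<le> b - 1"
      have "1 \<le> a * l" "a * l < a * b" using l assms(2,3) by auto
      thus "\<not> b * c dvd p ^ (a * l) - 1" using h unfolding primitive_divisor_def by blast
    qed
  next
    assume h: "b * c dvd p ^ (a * b) - 1 \<and>
                (\<forall>l. 1 \<le> l \<and> l \<le> b - 1 \<longrightarrow> \<not> b * c dvd p ^ (a * l) - 1)"
    show "primitive_divisor (b * c) p (a * b)"
      unfolding primitive_divisor_def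
    proof (intro conjI allI impI)
      show "b * c dvd p ^ (a * b) - 1" using h by blast
    next
      fix t assume t: "1 \<le> t \<and> t < a * b"
      show "\<not> b * c dvd p ^ t - 1"
      proof
        assume d: "b * c dvd p ^ t - 1"
        hence "c dvd p ^ t - 1" using dvd_mult_right by blast
        then obtain l where tl: "t = a * l" using ordt by blast
        have "1 \<le> l" "l \<le> b - 1" using t tl by (auto intro: Nat.gr0I)
        thus False using h d tl by blast
      qed
    qed
  qed
  show ?thesis using eq1 key by (simp add: power_mult)
qed

end
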